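(* Let $k\ge2$ and let $\alpha,\beta,\tau$ be the group formulas $\alpha(x)=\forall y\,([y^{-1}xy,x]=e)$, $\beta(y)=\forall x\,(\alpha(x)\rightarrow y^{-1}xy=x^k)$, and $\tau(x,y,h,b_1)=\alpha(x)\wedge\alpha(y)\wedge([h,b_1]=e)\wedge\beta(b_1)\wedge\forall v\,\forall w\,\big([v,b_1]=[w,b_1]=e\wedge\gamma(h,v,w,b_1)\rightarrow\exists u\,(\alpha(u)\wedge[v,y]=[w,x][v,[u,v]])\big)$, where $\gamma(x,y,z,t)$ is a group formula such that for every $b_1\in Ab$ and all $n,l,m\in\mathbb{Z}$, $BS(1,k)\models\gamma(b_1^n,b_1^l,b_1^m,b_1)$ iff $nl=m$. Then the formula $\pi(x)=\forall c\,\forall v\,\big(\alpha(c)\wedge\beta(v)\rightarrow\exists w\,\exists h\,([w,v]=e\wedge\tau(x,w^{-1}cw,h,v))\big)$ defines the set $A_1$ in $BS(1,k)$.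
   Context: $BS(1,k)=\langle a,b\mid b^{-1}ab=a^k\rangle$, identified with $\mathbb{Z}[1/k]\rtimes\mathbb{Z}$ (pairs $(y,m)$, $y\in\mathbb{Z}[1/k]=\{zk^i:z,i\in\mathbb{Z}\}$, product $(y_1,m_1)(y_2,m_2)=(y_1+y_2k^{-m_1},m_1+m_2)$), with $a=(1,0)$, $b=(0,1)$; $a^y=(y,0)$. $Ab=\{a^yb:y\in\mathbb{Z}[1/k]\}$ and $A_1=\{a^y: y\text{ a unit of }\mathbb{Z}[1/k]\}$. The commutator is $[x,y]=x^{-1}y^{-1}xy$. *)

theory Defs
  imports Complex_Main "HOL-Algebra.Group"
begin

definition Zk :: "int \<Rightarrow> rat set" where
  "Zk k = {of_int z * (of_int k) powi i | z i. True}"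

text \<open>BS(1,k) realised as Z[1/k] x Z with
  (y1,m1)(y2,m2) = (y1 + y2 k^(-m1), m1+m2).\<close>
definition BSG :: "int \<Rightarrow> (rat \<times> int) monoid" where
  "BSG k = \<lparr>carrier = Zk k \<times> UNIV,
            mult = (\<lambda>p q. (fst p + fst q * (of_int k) powi (- snd p), snd p + snd q)),
            one = (0, 0)\<rparr>"

definition aelt :: "rat \<Rightarrow> rat \<times> int" where "aelt y = (y, 0)"
definition belt :: "rat \<times> int" where "belt = (0, 1)"

definition Ab :: "int \<Rightarrow> (rat \<times> int) set" where
  "Ab k = {aelt y \<otimes>\<^bsub>BSG k\<^esub> belt | y. y \<in> Zk k}"

definition A1 :: "int \<Rightarrow> (rat \<times> int) set" where
  "A1 k = {aelt y | y. y \<in> Zk k \<and> (\<exists>z \<in> Zk k. y * z = 1)}"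

definition gcomm :: "('a, 'b) monoid_scheme \<Rightarrow> 'a \<Rightarrow> 'a \<Rightarrow> 'a" where
  "gcomm G x y = inv\<^bsub>G\<^esub> x \<otimes>\<^bsub>G\<^esub> inv\<^bsub>G\<^esub> y \<otimes>\<^bsub>G\<^esub> x \<otimes>\<^bsub>G\<^esub> y"

definition f_alpha :: "('a, 'b) monoid_scheme \<Rightarrow> 'a \<Rightarrow> bool" where
  "f_alpha G x = (\<forall>y \<in> carrier G. gcomm G (inv\<^bsub>G\<^esub> y \<otimes>\<^bsub>G\<^esub> x \<otimes>\<^bsub>G\<^esub> y) x = \<one>\<^bsub>G\<^esub>)"

definition f_beta :: "('a, 'b) monoid_scheme \<Rightarrow> int \<Rightarrow> 'a \<Rightarrow> bool" where
  "f_beta G k y = (\<forall>x \<in> carrier G. f_alpha G x \<longrightarrow>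
       inv\<^bsub>G\<^esub> y \<otimes>\<^bsub>G\<^esub> x \<otimes>\<^bsub>G\<^esub> y = x [^]\<^bsub>G\<^esub> k)"

definition f_tau :: "('a, 'b) monoid_scheme \<Rightarrow> int \<Rightarrow> ('a \<Rightarrow> 'a \<Rightarrow> 'a \<Rightarrow> 'a \<Rightarrow> bool)
                   \<Rightarrow> 'a \<Rightarrow> 'a \<Rightarrow> 'a \<Rightarrow> 'a \<Rightarrow> bool" where
  "f_tau G k \<gamma> x y h b1 =
     (f_alpha G x \<and> f_alpha G y \<and> gcomm G h b1 = \<one>\<^bsub>G\<^esub> \<and> f_beta G k b1 \<and>
      (\<forall>v \<in> carrier G. \<forall>w \<in> carrier G.
         gcomm G v b1 = \<one>\<^bsub>G\<^esub> \<and> gcomm G w b1 = \<one>\<^bsub>G\<^esub> \<and> \<gamma> h v w b1 \<longrightarrow>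
         (\<exists>u \<in> carrier G. f_alpha G u \<and>
            gcomm G v y = gcomm G w x \<otimes>\<^bsub>G\<^esub> gcomm G v (gcomm G u v))))"

definition f_pi :: "('a, 'b) monoid_scheme \<Rightarrow> int \<Rightarrow> ('a \<Rightarrow> 'a \<Rightarrow> 'a \<Rightarrow> 'a \<Rightarrow> bool)
                   \<Rightarrow> 'a \<Rightarrow> bool" where
  "f_pi G k \<gamma> x =
     (\<forall>c \<in> carrier G. \<forall>v \<in> carrier G. f_alpha G c \<and> f_beta G k v \<longrightarrow>
        (\<exists>w \<in> carrier G. \<exists>h \<in> carrier G. gcomm G w v = \<one>\<^bsub>G\<^esub> \<and>
           f_tau G k \<gamma> x (inv\<^bsub>G\<^esub> w \<otimes>\<^bsub>G\<^esub> c \<otimes>\<^bsub>G\<^esub> w) h v))"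

end

theory Submission
  imports Defs
begin

lemma Zk_iff:
  assumes "k \<ge> 2"
  shows "y \<in> Zk k \<longleftrightarrow> (\<exists>z (n::nat). y = of_int z / (of_int k) ^ n)"
proof
  assume "y \<in> Zk k"
  then obtain z i where y: "y = of_int z * (of_int k) powi i" unfolding Zk_def by auto
  show "\<exists>z (n::nat). y = of_int z / (of_int k) ^ n"
  proof (cases "i \<ge> 0")
    case True
    then have "y = of_int (z * k ^ nat i) / (of_int k) ^ 0"
      using y by (simp add: power_int_def)
    then show ?thesis by blast
  next
    case False
    then have "y = of_int z / (of_int k) ^ nat (- i)"
      using y by (simp add: power_int_def field_simps)
    then show ?thesis by blast
  qed
next
  assume "\<exists>z (n::nat). y = of_int z / (of_int k) ^ n"
  then obtain z and n :: nat where y: "y = of_int z / (of_int k) ^ n" by blast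
  have "y = of_int z * (of_int k) powi (- int n)"
    using y by (simp add: power_int_minus field_simps power_int_def)
  then show "y \<in> Zk k" unfolding Zk_def by blast
qed

lemma Zk_add:
  assumes "k \<ge> 2" "x \<in> Zk k" "y \<in> Zk k"
  shows "x + y \<in> Zk k"
proof -
  obtain z1 and n1 :: nat where 1: "x = of_int z1 / (of_int k) ^ n1" using assms Zk_iff by blast
  obtain z2 and n2 :: nat where 2: "y = of_int z2 / (of_int k) ^ n2" using assms Zk_iff by blast
  have "x + y = of_int (z1 * k ^ n2 + z2 * k ^ n1) / (of_int k) ^ (n1 + n2)"
    using assms(1) unfolding 1 2 by (simp add: field_simps power_add)
  then show ?thesis using Zk_iff assms(1) by blast
qed

lemma Zk_mult:
  assumes "k \<ge> 2" "x \<in> Zk k" "y \<in> Zk k"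
  shows "x * y \<in> Zk k"
proof -
  obtain z1 and n1 :: nat where 1: "x = of_int z1 / (of_int k) ^ n1" using assms Zk_iff by blast
  obtain z2 and n2 :: nat where 2: "y = of_int z2 / (of_int k) ^ n2" using assms Zk_iff by blast
  have "x * y = of_int (z1 * z2) / (of_int k) ^ (n1 + n2)"
    using assms(1) unfolding 1 2 by (simp add: field_simps power_add)
  then show ?thesis using Zk_iff assms(1) by blast
qed

lemma Zk_uminus:
  assumes "k \<ge> 2" "x \<in> Zk k"
  shows "- x \<in> Zk k"
proof -
  obtain z1 and n1 :: nat where 1: "x = of_int z1 / (of_int k) ^ n1" using assms Zk_iff by blast
  have "- x = of_int (- z1) / (of_int k) ^ n1" using 1 by simp
  then show ?thesis using Zk_iff assms(1) by blast
qed

lemma Zk_diff: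
  assumes "k \<ge> 2" "x \<in> Zk k" "y \<in> Zk k"
  shows "x - y \<in> Zk k"
  using Zk_add[OF assms(1,2) Zk_uminus[OF assms(1,3)]] by simp

lemma Zk_int: "of_int z \<in> Zk k"
proof -
  have "(of_int z :: rat) = of_int z * (of_int k) powi 0" by simp
  then show ?thesis unfolding Zk_def by blast
qed

lemma Zk_powi: "(of_int k :: rat) powi i \<in> Zk k"
proof -
  have "(of_int k :: rat) powi i = of_int 1 * (of_int k) powi i" by simp
  then show ?thesis unfolding Zk_def by blast
qed

lemma Zk_0: "0 \<in> Zk k" using Zk_int[of 0 k] by simp
lemma Zk_1: "1 \<in> Zk k" using Zk_int[of 1 k] by simp

lemma pwr: assumes "(K::rat) \<noteq> 0" shows "K powi (- a - b) = K powi (-a) * K powi (-b)"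
  using assms by (metis power_int_add diff_conv_add_uminus)

lemma BSG_mult: "p \<otimes>\<^bsub>BSG k\<^esub> q = (fst p + fst q * (of_int k) powi (- snd p), snd p + snd q)"
  by (simp add: BSG_def)

lemma BSG_one: "\<one>\<^bsub>BSG k\<^esub> = (0, 0)"
  by (simp add: BSG_def)

lemma BSG_carrier: "p \<in> carrier (BSG k) \<longleftrightarrow> fst p \<in> Zk k"
  by (cases p) (simp add: BSG_def)

lemma BSG_group:
  assumes k: "k \<ge> 2"
  shows "group (BSG k)"
proof (rule groupI)
  have kn: "(of_int k :: rat) \<noteq> 0" using k by simp
  fix x y
  assume "x \<in> carrier (BSG k)" "y \<in> carrier (BSG k)"
  then show "x \<otimes>\<^bsub>BSG k\<^esub> y \<in> carrier (BSG k)"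
    by (simp add: BSG_mult BSG_carrier Zk_add Zk_mult Zk_powi k)
next
  show "\<one>\<^bsub>BSG k\<^esub> \<in> carrier (BSG k)" by (simp add: BSG_one BSG_carrier Zk_0)
next
  have kn: "(of_int k :: rat) \<noteq> 0" using k by simp
  note pwr = pwr[OF kn]
  fix x y z
  show "x \<otimes>\<^bsub>BSG k\<^esub> y \<otimes>\<^bsub>BSG k\<^esub> z = x \<otimes>\<^bsub>BSG k\<^esub> (y \<otimes>\<^bsub>BSG k\<^esub> z)"
    using kn pwr[of "snd x" "snd y"] by (simp add: BSG_mult algebra_simps)
next
  fix x
  show "\<one>\<^bsub>BSG k\<^esub> \<otimes>\<^bsub>BSG k\<^esub> x = x" by (simp add: BSG_mult BSG_one)
next
  have kn: "(of_int k :: rat) \<noteq> 0" using k by simp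
  fix x
  assume x: "x \<in> carrier (BSG k)"
  let ?y = "(- (fst x * (of_int k) powi (snd x)), - snd x)"
  have "?y \<in> carrier (BSG k)"
    using x by (simp add: BSG_carrier Zk_uminus Zk_mult Zk_powi k)
  moreover have "?y \<otimes>\<^bsub>BSG k\<^esub> x = \<one>\<^bsub>BSG k\<^esub>"
    using kn by (simp add: BSG_mult BSG_one power_int_minus)
  ultimately show "\<exists>y \<in> carrier (BSG k). y \<otimes>\<^bsub>BSG k\<^esub> x = \<one>\<^bsub>BSG k\<^esub>" by blast
qed

lemma BSG_inv:
  assumes k: "k \<ge> 2" and x: "x \<in> carrier (BSG k)"
  shows "inv\<^bsub>BSG k\<^esub> x = (- (fst x * (of_int k) powi (snd x)), - snd x)"
proof -
  interpret group "BSG k" using BSG_group[OF k] .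
  have kn: "(of_int k :: rat) \<noteq> 0" using k by simp
  let ?y = "(- (fst x * (of_int k) powi (snd x)), - snd x)"
  have "?y \<in> carrier (BSG k)"
    using x by (simp add: BSG_carrier Zk_uminus Zk_mult Zk_powi k)
  moreover have "?y \<otimes>\<^bsub>BSG k\<^esub> x = \<one>\<^bsub>BSG k\<^esub>"
    using kn by (simp add: BSG_mult BSG_one power_int_minus)
  ultimately show ?thesis using inv_equality x by blast
qed

lemma gcomm_one_iff:
  assumes "group G" "x \<in> carrier G" "y \<in> carrier G"
  shows "gcomm G x y = \<one>\<^bsub>G\<^esub> \<longleftrightarrow> x \<otimes>\<^bsub>G\<^esub> y = y \<otimes>\<^bsub>G\<^esub> x"
proof -
  interpret group G by fact
  have "gcomm G x y = inv\<^bsub>G\<^esub> (y \<otimes>\<^bsub>G\<^esub> x) \<otimes>\<^bsub>G\<^esub> (x \<otimes>\<^bsub>G\<^esub> y)"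
    unfolding gcomm_def using assms by (simp add: inv_mult_group m_assoc)
  also have "\<dots> = \<one>\<^bsub>G\<^esub> \<longleftrightarrow> x \<otimes>\<^bsub>G\<^esub> y = y \<otimes>\<^bsub>G\<^esub> x"
    using assms by (metis inv_closed inv_equality inv_inv m_closed r_inv)
  finally show ?thesis .
qed

lemma snd_pow_nat:
  assumes k: "k \<ge> 2" and x: "x \<in> carrier (BSG k)"
  shows "snd (x [^]\<^bsub>BSG k\<^esub> (n::nat)) = int n * snd x"
  by (induction n) (simp_all add: BSG_mult BSG_one algebra_simps)

lemma int_cases_pow:
  assumes "\<And>m::nat. n = int m \<Longrightarrow> P" "\<And>m::nat. n = - int m \<Longrightarrow> P"
  shows P
  using assms by (metis int_cases2)

lemma snd_pow:
  assumes k: "k \<ge> 2" and x: "x \<in> carrier (BSG k)"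
  shows "snd (x [^]\<^bsub>BSG k\<^esub> (n::int)) = n * snd x"
proof -
  interpret group "BSG k" using BSG_group[OF k] .
  show ?thesis
  proof (rule int_cases_pow[of n])
    fix m assume n: "n = - int m"
    have "x [^]\<^bsub>BSG k\<^esub> n = inv\<^bsub>BSG k\<^esub> (x [^]\<^bsub>BSG k\<^esub> m)"
      unfolding n using int_pow_neg_int[OF x] .
    then show ?thesis using x n
      by (simp add: BSG_inv[OF k] snd_pow_nat[OF k x])
  next
    fix m assume n: "n = int m"
    have "x [^]\<^bsub>BSG k\<^esub> n = x [^]\<^bsub>BSG k\<^esub> m"
      unfolding n by (rule int_pow_int)
    then show ?thesis using x n
      by (simp add: snd_pow_nat[OF k x])
  qed
qed

lemma pow_A_nat:
  assumes k: "k \<ge> 2"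
  shows "(t, 0) [^]\<^bsub>BSG k\<^esub> (n::nat) = (of_nat n * t, 0)"
  by (induction n) (simp_all add: BSG_mult BSG_one algebra_simps)

lemma pow_A:
  assumes k: "k \<ge> 2" and t: "t \<in> Zk k"
  shows "(t, 0) [^]\<^bsub>BSG k\<^esub> (n::int) = (of_int n * t, 0)"
proof -
  interpret group "BSG k" using BSG_group[OF k] .
  have c: "(of_nat m * t, 0) \<in> carrier (BSG k)" for m :: nat
    using t Zk_mult[OF k Zk_int[of "int m" k] t] by (simp add: BSG_carrier)
  have x: "(t, 0) \<in> carrier (BSG k)" using t by (simp add: BSG_carrier)
  show ?thesis
  proof (rule int_cases_pow[of n])
    fix m assume n: "n = - int m"
    have "(t, 0) [^]\<^bsub>BSG k\<^esub> n = inv\<^bsub>BSG k\<^esub> ((t, 0) [^]\<^bsub>BSG k\<^esub> m)"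
      unfolding n using int_pow_neg_int[OF x] .
    then show ?thesis using c[of m] n
      by (simp add: BSG_inv[OF k] pow_A_nat[OF k])
  next
    fix m assume n: "n = int m"
    have "(t, 0) [^]\<^bsub>BSG k\<^esub> n = (t, 0) [^]\<^bsub>BSG k\<^esub> m"
      unfolding n by (rule int_pow_int)
    then show ?thesis using n
      by (simp add: pow_A_nat[OF k])
  qed
qed

lemma conj_A:
  assumes k: "k \<ge> 2" and g: "g \<in> carrier (BSG k)" and t: "t \<in> Zk k"
  shows "inv\<^bsub>BSG k\<^esub> g \<otimes>\<^bsub>BSG k\<^esub> (t, 0) \<otimes>\<^bsub>BSG k\<^esub> g = (t * (of_int k) powi (snd g), 0)"
proof -
  have kn: "(of_int k :: rat) \<noteq> 0" using k by simp
  show ?thesis by (simp add: BSG_inv[OF k g] BSG_mult)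
qed

lemma inv_A:
  assumes k: "k \<ge> 2" and t: "t \<in> Zk k"
  shows "inv\<^bsub>BSG k\<^esub> (t, 0) = (- t, 0)"
  using t by (simp add: BSG_inv[OF k] BSG_carrier)

lemma gcomm_gA:
  assumes k: "k \<ge> 2" and g: "g \<in> carrier (BSG k)" and t: "t \<in> Zk k"
  shows "gcomm (BSG k) g (t, 0) = (t * (1 - (of_int k) powi (snd g)), 0)"
proof -
  have "gcomm (BSG k) g (t, 0) = (inv\<^bsub>BSG k\<^esub> g \<otimes>\<^bsub>BSG k\<^esub> (- t, 0) \<otimes>\<^bsub>BSG k\<^esub> g) \<otimes>\<^bsub>BSG k\<^esub> (t, 0)"
    unfolding gcomm_def inv_A[OF k t] ..
  also have "\<dots> = (- t * (of_int k) powi (snd g), 0) \<otimes>\<^bsub>BSG k\<^esub> (t, 0)"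
    using conj_A[OF k g Zk_uminus[OF k t]] by simp
  also have "\<dots> = (t * (1 - (of_int k) powi (snd g)), 0)"
    by (simp add: BSG_mult algebra_simps)
  finally show ?thesis .
qed

lemma gcomm_Ag:
  assumes k: "k \<ge> 2" and g: "g \<in> carrier (BSG k)" and t: "t \<in> Zk k"
  shows "gcomm (BSG k) (t, 0) g = (t * ((of_int k) powi (snd g) - 1), 0)"
proof -
  interpret group "BSG k" using BSG_group[OF k] .
  have tc: "(t, 0) \<in> carrier (BSG k)" "(-t, 0) \<in> carrier (BSG k)"
    using t Zk_uminus[OF k t] by (simp_all add: BSG_carrier)
  have "gcomm (BSG k) (t, 0) g = (- t, 0) \<otimes>\<^bsub>BSG k\<^esub> (inv\<^bsub>BSG k\<^esub> g \<otimes>\<^bsub>BSG k\<^esub> (t, 0) \<otimes>\<^bsub>BSG k\<^esub> g)"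
    unfolding gcomm_def inv_A[OF k t] using tc g by (simp add: m_assoc)
  also have "\<dots> = (- t, 0) \<otimes>\<^bsub>BSG k\<^esub> (t * (of_int k) powi (snd g), 0)"
    using conj_A[OF k g t] by simp
  also have "\<dots> = (t * ((of_int k) powi (snd g) - 1), 0)"
    by (simp add: BSG_mult algebra_simps)
  finally show ?thesis .
qed

lemma powi_inj:
  assumes "(K::rat) > 1" "K powi m = K powi n"
  shows "m = n"
proof (rule ccontr)
  assume "m \<noteq> n"
  then have "m < n \<or> n < m" by linarith
  then show False
    using assms power_int_strict_increasing[of m n K] power_int_strict_increasing[of n m K]
    by auto
qed

lemma K_gt1: "k \<ge> 2 \<Longrightarrow> (of_int k :: rat) > 1" by simp

lemma alpha_iff:
  assumes k: "k \<ge> 2" and x: "x \<in> carrier (BSG k)"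
  shows "f_alpha (BSG k) x \<longleftrightarrow> snd x = 0"
proof
  interpret group "BSG k" using BSG_group[OF k] .
  assume a: "f_alpha (BSG k) x"
  show "snd x = 0"
  proof (rule ccontr)
    assume m: "snd x \<noteq> 0"
    define X where "X = fst x"
    define m where "m = snd x"
    have xe: "x = (X, m)" unfolding X_def m_def by simp
    have X: "X \<in> Zk k" using x unfolding X_def by (simp add: BSG_carrier)
    have yc: "(1, 0) \<in> carrier (BSG k)" by (simp add: BSG_carrier Zk_1)
    let ?x' = "inv\<^bsub>BSG k\<^esub> (1, 0) \<otimes>\<^bsub>BSG k\<^esub> x \<otimes>\<^bsub>BSG k\<^esub> (1, 0)"
    have x'e: "?x' = (X - 1 + (of_int k) powi (- m), m)"
      unfolding xe by (simp add: inv_A[OF k Zk_1] BSG_mult)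
    have x'c: "?x' \<in> carrier (BSG k)" using yc x by simp
    have "gcomm (BSG k) ?x' x = \<one>\<^bsub>BSG k\<^esub>" using a yc unfolding f_alpha_def by blast
    then have "?x' \<otimes>\<^bsub>BSG k\<^esub> x = x \<otimes>\<^bsub>BSG k\<^esub> ?x'"
      using gcomm_one_iff[OF BSG_group[OF k] x'c x] by simp
    then have "(X - 1 + (of_int k) powi (- m), m) \<otimes>\<^bsub>BSG k\<^esub> x = x \<otimes>\<^bsub>BSG k\<^esub> (X - 1 + (of_int k) powi (- m), m)"
      by (simp only: x'e)
    then have "X - 1 + (of_int k) powi (- m) + X * (of_int k) powi (- m)
       = X + (X - 1 + (of_int k) powi (- m)) * (of_int k) powi (- m)"
      unfolding xe by (simp add: BSG_mult)
    then have "((of_int k :: rat) powi (- m) - 1) * ((of_int k) powi (- m) - 1) = 0"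
      by (simp add: algebra_simps)
    then have "(of_int k :: rat) powi (- m) = (of_int k) powi 0" by simp
    then have "- m = 0" using powi_inj[OF K_gt1[OF k]] by blast
    then show False using m unfolding m_def by simp
  qed
next
  interpret group "BSG k" using BSG_group[OF k] .
  assume s: "snd x = 0"
  define X where "X = fst x"
  have xe: "x = (X, 0)" unfolding X_def using s by (metis prod.collapse)
  have X: "X \<in> Zk k" using x unfolding X_def by (simp add: BSG_carrier)
  show "f_alpha (BSG k) x" unfolding f_alpha_def
  proof
    fix y assume y: "y \<in> carrier (BSG k)"
    have p: "X * (of_int k) powi (snd y) \<in> Zk k" using Zk_mult[OF k X Zk_powi] .
    have pc: "(X * (of_int k) powi (snd y), 0) \<in> carrier (BSG k)" using p by (simp add: BSG_carrier)
    show "gcomm (BSG k) (inv\<^bsub>BSG k\<^esub> y \<otimes>\<^bsub>BSG k\<^esub> x \<otimes>\<^bsub>BSG k\<^esub> y) x = \<one>\<^bsub>BSG k\<^esub>"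
      unfolding xe conj_A[OF k y X] gcomm_gA[OF k pc X] by (simp add: BSG_one)
  qed
qed

lemma beta_iff:
  assumes k: "k \<ge> 2" and y: "y \<in> carrier (BSG k)"
  shows "f_beta (BSG k) k y \<longleftrightarrow> snd y = 1"
proof
  interpret group "BSG k" using BSG_group[OF k] .
  assume b: "f_beta (BSG k) k y"
  have c1: "(1, 0) \<in> carrier (BSG k)" by (simp add: BSG_carrier Zk_1)
  have "f_alpha (BSG k) (1, 0)" using alpha_iff[OF k c1] by simp
  then have "inv\<^bsub>BSG k\<^esub> y \<otimes>\<^bsub>BSG k\<^esub> (1, 0) \<otimes>\<^bsub>BSG k\<^esub> y = (1, 0) [^]\<^bsub>BSG k\<^esub> k"
    using b c1 unfolding f_beta_def by blast
  then have "(of_int k :: rat) powi (snd y) = (of_int k) powi 1"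
    unfolding conj_A[OF k y Zk_1] pow_A[OF k Zk_1] by simp
  then show "snd y = 1" using powi_inj[OF K_gt1[OF k]] by blast
next
  interpret group "BSG k" using BSG_group[OF k] .
  assume s: "snd y = 1"
  show "f_beta (BSG k) k y" unfolding f_beta_def
  proof (intro ballI impI)
    fix x assume x: "x \<in> carrier (BSG k)" and a: "f_alpha (BSG k) x"
    define X where "X = fst x"
    have xe: "x = (X, 0)" unfolding X_def using alpha_iff[OF k x] a by (metis prod.collapse)
    have X: "X \<in> Zk k" using x unfolding X_def by (simp add: BSG_carrier)
    show "inv\<^bsub>BSG k\<^esub> y \<otimes>\<^bsub>BSG k\<^esub> x \<otimes>\<^bsub>BSG k\<^esub> y = x [^]\<^bsub>BSG k\<^esub> k"
      unfolding xe conj_A[OF k y X] pow_A[OF k X] using s by simp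
  qed
qed

lemma cent_unique:
  assumes k: "k \<ge> 2" and b: "b \<in> carrier (BSG k)" "snd b = 1"
    and g1: "g1 \<in> carrier (BSG k)" "g1 \<otimes>\<^bsub>BSG k\<^esub> b = b \<otimes>\<^bsub>BSG k\<^esub> g1"
    and g2: "g2 \<in> carrier (BSG k)" "g2 \<otimes>\<^bsub>BSG k\<^esub> b = b \<otimes>\<^bsub>BSG k\<^esub> g2"
    and s: "snd g1 = snd g2"
  shows "g1 = g2"
proof -
  have e1: "fst g1 + fst b * (of_int k) powi (- snd g1) = fst b + fst g1 * (of_int k) powi (-1)"
    using g1(2) b(2) by (simp add: BSG_mult prod_eq_iff)
  have e2: "fst g2 + fst b * (of_int k) powi (- snd g1) = fst b + fst g2 * (of_int k) powi (-1)"
    using g2(2) b(2) s by (simp add: BSG_mult prod_eq_iff)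
  have "(fst g1 - fst g2) * (1 - (of_int k) powi (-1)) = 0"
    using e1 e2 by (simp add: algebra_simps)
  moreover have "(of_int k :: rat) powi (-1) \<noteq> (of_int k) powi 0"
    using powi_inj[OF K_gt1[OF k], of "-1" 0] by auto
  ultimately have "fst g1 = fst g2" by simp
  then show ?thesis using s by (simp add: prod_eq_iff)
qed

lemma pow_comm:
  assumes k: "k \<ge> 2" and b: "b \<in> carrier (BSG k)"
  shows "b [^]\<^bsub>BSG k\<^esub> (n::int) \<otimes>\<^bsub>BSG k\<^esub> b = b \<otimes>\<^bsub>BSG k\<^esub> b [^]\<^bsub>BSG k\<^esub> n"
proof -
  interpret group "BSG k" using BSG_group[OF k] .
  have "b [^]\<^bsub>BSG k\<^esub> (n + 1) = b [^]\<^bsub>BSG k\<^esub> n \<otimes>\<^bsub>BSG k\<^esub> b [^]\<^bsub>BSG k\<^esub> (1::int)"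
    using int_pow_mult[OF b] by blast
  moreover have "b [^]\<^bsub>BSG k\<^esub> (1 + n) = b [^]\<^bsub>BSG k\<^esub> (1::int) \<otimes>\<^bsub>BSG k\<^esub> b [^]\<^bsub>BSG k\<^esub> n"
    using int_pow_mult[OF b] by blast
  ultimately show ?thesis using b by (simp add: add.commute)
qed

lemma cent:
  assumes k: "k \<ge> 2" and b: "b \<in> carrier (BSG k)" "snd b = 1"
    and g: "g \<in> carrier (BSG k)" "gcomm (BSG k) g b = \<one>\<^bsub>BSG k\<^esub>"
  shows "g = b [^]\<^bsub>BSG k\<^esub> (snd g)"
proof -
  interpret group "BSG k" using BSG_group[OF k] .
  show ?thesis
  proof (rule cent_unique[OF k b g(1) _ _ pow_comm[OF k b(1)]])
    show "g \<otimes>\<^bsub>BSG k\<^esub> b = b \<otimes>\<^bsub>BSG k\<^esub> g"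
      using gcomm_one_iff[OF BSG_group[OF k] g(1) b(1)] g(2) by simp
    show "b [^]\<^bsub>BSG k\<^esub> snd g \<in> carrier (BSG k)" using b by simp
    show "snd g = snd (b [^]\<^bsub>BSG k\<^esub> snd g)" using snd_pow[OF k b(1)] b(2) by simp
  qed
qed

lemma pow_cent:
  assumes k: "k \<ge> 2" and b: "b \<in> carrier (BSG k)"
  shows "gcomm (BSG k) (b [^]\<^bsub>BSG k\<^esub> (n::int)) b = \<one>\<^bsub>BSG k\<^esub>"
proof -
  interpret group "BSG k" using BSG_group[OF k] .
  show ?thesis using gcomm_one_iff[OF BSG_group[OF k] _ b] pow_comm[OF k b] b by simp
qed

lemma beta_Ab:
  assumes k: "k \<ge> 2" and b: "b \<in> carrier (BSG k)" "snd b = 1"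
  shows "b \<in> Ab k"
proof -
  have "b = aelt (fst b) \<otimes>\<^bsub>BSG k\<^esub> belt" using b(2)
    by (simp add: aelt_def belt_def BSG_mult prod_eq_iff)
  moreover have "fst b \<in> Zk k" using b by (simp add: BSG_carrier)
  ultimately show ?thesis unfolding Ab_def by blast
qed

lemma geom_cong:
  assumes k: "k \<ge> 2" and q: "q \<in> Zk k" "q \<noteq> 0" "inverse q \<in> Zk k"
  shows "\<exists>Q \<in> Zk k. q powi n - 1 = of_int n * (q - 1) + (q - 1)^2 * Q"
proof (induction n rule: int_induct[where k=0])
  case base
  show ?case using Zk_0 by auto
next
  case (step1 i)
  then obtain Q where Q: "Q \<in> Zk k" "q powi i - 1 = of_int i * (q - 1) + (q - 1)^2 * Q" by blast
  have P: "q powi i = 1 + of_int i * (q - 1) + (q - 1)^2 * Q" using Q(2) by (simp add: algebra_simps)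
  have "q powi (i + 1) = q powi i * q" using q(2) by (simp add: power_int_add)
  then have "q powi (i + 1) - 1 = (1 + of_int i * (q - 1) + (q - 1)^2 * Q) * q - 1"
    unfolding P by simp
  also have "\<dots> = of_int (i + 1) * (q - 1) + (q - 1)^2 * (of_int i + q * Q)"
    by (simp add: algebra_simps power2_eq_square)
  finally have "q powi (i + 1) - 1 = of_int (i + 1) * (q - 1) + (q - 1)^2 * (of_int i + q * Q)" .
  moreover have "of_int i + q * Q \<in> Zk k" using Zk_add[OF k Zk_int Zk_mult[OF k q(1) Q(1)]] .
  ultimately show ?case by blast
next
  case (step2 i)
  then obtain Q where Q: "Q \<in> Zk k" "q powi i - 1 = of_int i * (q - 1) + (q - 1)^2 * Q" by blast
  have qi: "q powi i = q powi (i - 1) * q" using q(2) power_int_add[of q "i - 1" 1] by simp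
  define P where "P = q powi (i - 1)"
  have e: "P * q - 1 = of_int i * (q - 1) + (q - 1)^2 * Q" using Q(2) qi unfolding P_def by simp
  have "P - 1 = of_int (i - 1) * (q - 1) + (q - 1)^2 * ((Q - of_int (i - 1)) * inverse q)"
  proof -
    have "(P - 1) * q = (of_int (i - 1) * (q - 1) + (q - 1)^2 * ((Q - of_int (i - 1)) * inverse q)) * q"
    proof -
      have rq: "inverse q * q = 1" using q(2) by simp
      show ?thesis using e rq unfolding of_int_diff of_int_1 by algebra
    qed
    then show ?thesis using q(2) by simp
  qed
  moreover have "(Q - of_int (i - 1)) * inverse q \<in> Zk k"
    using Zk_mult[OF k Zk_diff[OF k Q(1) Zk_int] q(3)] .
  ultimately show ?case unfolding P_def by blast
qed

lemma zero_by_div: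
  assumes k: "k \<ge> 2" and D: "D \<in> Zk k"
    and H: "\<And>l::nat. l \<ge> 1 \<Longrightarrow> \<exists>U \<in> Zk k. D = ((of_int k)^l - 1) * U"
  shows "D = 0"
proof (rule ccontr)
  assume D0: "D \<noteq> 0"
  obtain d and e :: nat where de: "D = of_int d / (of_int k)^e" using D Zk_iff[OF k] by blast
  have d0: "d \<noteq> 0" using D0 de by auto
  define l where "l = nat \<bar>d\<bar> + 1"
  have l1: "l \<ge> 1" unfolding l_def by simp
  obtain U where U: "U \<in> Zk k" "D = ((of_int k)^l - 1) * U" using H[OF l1] by blast
  obtain u and f :: nat where uf: "U = of_int u / (of_int k)^f" using U(1) Zk_iff[OF k] by blast
  have kn: "(of_int k :: rat) \<noteq> 0" using k by simp
  have "(of_int d :: rat) / (of_int k)^e = ((of_int k)^l - 1) * (of_int u / (of_int k)^f)"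
    using U(2) de uf by simp
  then have "(of_int d :: rat) * (of_int k)^f = ((of_int k)^l - 1) * of_int u * (of_int k)^e"
    using kn by (simp add: field_simps)
  then have "(of_int (d * k^f) :: rat) = of_int ((k^l - 1) * u * k^e)" by simp
  then have eq: "d * k^f = (k^l - 1) * u * k^e" by (simp only: of_int_eq_iff)
  have dv: "(k^l - 1) dvd d * k^f" unfolding eq by simp
  have "coprime (k^l - 1) (k^l)" by (rule coprime_diff_one_left)
  then have "coprime (k^l - 1) k" using l1 coprime_power_right_iff[of "k^l - 1" k l] by linarith
  then have "coprime (k^l - 1) (k^f)" by simp
  then have "(k^l - 1) dvd d" using dv coprime_dvd_mult_left_iff by blast
  then have le: "\<bar>k^l - 1\<bar> \<le> \<bar>d\<bar>" using dvd_imp_le_int d0 by blast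
  have "(2::int)^l \<le> k^l" using k by (intro power_mono) auto
  moreover have "int l < 2^l" using less_exp[of l] by (metis of_nat_less_iff of_nat_numeral of_nat_power)
  ultimately have "int l < k^l" by linarith
  then have "\<bar>k^l - 1\<bar> \<ge> int l" by linarith
  then show False using le unfolding l_def by linarith
qed

theorem lemma4p10:
  fixes k :: int and \<gamma> :: "rat \<times> int \<Rightarrow> rat \<times> int \<Rightarrow> rat \<times> int \<Rightarrow> rat \<times> int \<Rightarrow> bool"
  assumes "k \<ge> 2"
    and "\<forall>b1 \<in> Ab k. \<forall>n l m :: int.
           \<gamma> (b1 [^]\<^bsub>BSG k\<^esub> n) (b1 [^]\<^bsub>BSG k\<^esub> l) (b1 [^]\<^bsub>BSG k\<^esub> m) b1 \<longleftrightarrow> n * l = m"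
  shows "{x \<in> carrier (BSG k). f_pi (BSG k) k \<gamma> x} = A1 k"
proof -
  have k: "k \<ge> 2" using assms(1) .
  interpret group "BSG k" using BSG_group[OF k] .
  have kn: "(of_int k :: rat) \<noteq> 0" using k by simp
  have GC: "\<exists>Q \<in> Zk k. ((of_int k) powi l) powi n - 1
              = of_int n * ((of_int k) powi l - 1) + ((of_int k) powi l - 1)^2 * Q" for l n :: int
  proof (rule geom_cong[OF k Zk_powi])
    show "(of_int k :: rat) powi l \<noteq> 0" using kn by simp
    show "inverse ((of_int k :: rat) powi l) \<in> Zk k"
      using Zk_powi[of k "- l"] by (simp add: power_int_minus)
  qed
  have gam: "\<gamma> (b [^]\<^bsub>BSG k\<^esub> n) (b [^]\<^bsub>BSG k\<^esub> l) (b [^]\<^bsub>BSG k\<^esub> m) b \<longleftrightarrow> n * l = m"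
    if "b \<in> Ab k" for b and n l m :: int
    using assms(2) that by blast
  show ?thesis
  proof (intro equalityI subsetI)
    fix x assume "x \<in> {x \<in> carrier (BSG k). f_pi (BSG k) k \<gamma> x}"
    then have xc: "x \<in> carrier (BSG k)" and pi: "f_pi (BSG k) k \<gamma> x" by auto
    define c where "c = (1::rat, 0::int)"
    define v where "v = (0::rat, 1::int)"
    have cc: "c \<in> carrier (BSG k)" unfolding c_def by (simp add: BSG_carrier Zk_1)
    have vc: "v \<in> carrier (BSG k)" unfolding v_def by (simp add: BSG_carrier Zk_0)
    have sv: "snd v = 1" unfolding v_def by simp
    have ca: "f_alpha (BSG k) c" using alpha_iff[OF k cc] unfolding c_def by simp
    have vb: "f_beta (BSG k) k v" using beta_iff[OF k vc] sv by simp
    have vAb: "v \<in> Ab k" using beta_Ab[OF k vc sv] .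
    obtain w h where wc: "w \<in> carrier (BSG k)" and hc: "h \<in> carrier (BSG k)"
      and tau: "f_tau (BSG k) k \<gamma> x (inv\<^bsub>BSG k\<^esub> w \<otimes>\<^bsub>BSG k\<^esub> c \<otimes>\<^bsub>BSG k\<^esub> w) h v"
      using pi cc vc ca vb unfolding f_pi_def by blast
    define j where "j = snd w"
    have ye: "inv\<^bsub>BSG k\<^esub> w \<otimes>\<^bsub>BSG k\<^esub> c \<otimes>\<^bsub>BSG k\<^esub> w = ((of_int k) powi j, 0)"
      using conj_A[OF k wc Zk_1] unfolding c_def j_def by simp
    have ax: "f_alpha (BSG k) x" and hv: "gcomm (BSG k) h v = \<one>\<^bsub>BSG k\<^esub>"
      and cl: "\<And>v' w'. v' \<in> carrier (BSG k) \<Longrightarrow> w' \<in> carrier (BSG k) \<Longrightarrow>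
         gcomm (BSG k) v' v = \<one>\<^bsub>BSG k\<^esub> \<Longrightarrow> gcomm (BSG k) w' v = \<one>\<^bsub>BSG k\<^esub> \<Longrightarrow> \<gamma> h v' w' v \<Longrightarrow>
         (\<exists>u \<in> carrier (BSG k). f_alpha (BSG k) u \<and>
            gcomm (BSG k) v' ((of_int k) powi j, 0) = gcomm (BSG k) w' x \<otimes>\<^bsub>BSG k\<^esub> gcomm (BSG k) v' (gcomm (BSG k) u v'))"
      using tau unfolding f_tau_def ye by blast+
    define X where "X = fst x"
    have xe: "x = (X, 0)" unfolding X_def using alpha_iff[OF k xc] ax by (metis prod.collapse)
    have X: "X \<in> Zk k" using xc unfolding X_def by (simp add: BSG_carrier)
    define n where "n = snd h"
    have he: "h = v [^]\<^bsub>BSG k\<^esub> n" unfolding n_def using cent[OF k vc sv hc hv] .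
    define D where "D = (of_int k) powi j - of_int n * X"
    have DZ: "D \<in> Zk k" unfolding D_def using Zk_diff[OF k Zk_powi Zk_mult[OF k Zk_int X]] .
    have "D = 0"
    proof (rule zero_by_div[OF k DZ])
      fix l :: nat assume l1: "l \<ge> 1"
      define v' where "v' = v [^]\<^bsub>BSG k\<^esub> (int l)"
      define w' where "w' = v [^]\<^bsub>BSG k\<^esub> (n * int l)"
      have v'c: "v' \<in> carrier (BSG k)" and w'c: "w' \<in> carrier (BSG k)"
        unfolding v'_def w'_def using vc by simp_all
      have sv': "snd v' = int l" unfolding v'_def using snd_pow[OF k vc] sv by simp
      have sw': "snd w' = n * int l" unfolding w'_def using snd_pow[OF k vc] sv by simp
      have g: "\<gamma> h v' w' v" unfolding he v'_def w'_def using gam[OF vAb] by simp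
      obtain u where uc: "u \<in> carrier (BSG k)" and ua: "f_alpha (BSG k) u"
        and eq: "gcomm (BSG k) v' ((of_int k) powi j, 0) = gcomm (BSG k) w' x \<otimes>\<^bsub>BSG k\<^esub> gcomm (BSG k) v' (gcomm (BSG k) u v')"
        using cl[OF v'c w'c _ _ g] pow_cent[OF k vc] unfolding v'_def w'_def by blast
      define U where "U = fst u"
      have ue: "u = (U, 0)" unfolding U_def using alpha_iff[OF k uc] ua by (metis prod.collapse)
      have U: "U \<in> Zk k" using uc unfolding U_def by (simp add: BSG_carrier)
      define q where "q = (of_int k :: rat) powi (int l)"
      have e3: "gcomm (BSG k) u v' = (U * (q - 1), 0)"
        using gcomm_Ag[OF k v'c U] sv' q_def ue by simp
      have UZ: "U * (q - 1) \<in> Zk k"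
        unfolding q_def using Zk_mult[OF k U Zk_diff[OF k Zk_powi Zk_1]] .
      have e4: "gcomm (BSG k) v' (U * (q - 1), 0) = (U * (q - 1) * (1 - q), 0)"
        using gcomm_gA[OF k v'c UZ] sv' q_def  by simp
      have e1: "gcomm (BSG k) v' ((of_int k) powi j, 0) = ((of_int k) powi j * (1 - q), 0)"
        using gcomm_gA[OF k v'c Zk_powi] sv' q_def  by simp
      have e2: "gcomm (BSG k) w' x = (X * (1 - q powi n), 0)"
        unfolding xe using gcomm_gA[OF k w'c X] sw' q_def
        by (simp add: mult.commute[of n] power_int_mult)
      have E: "(of_int k) powi j * (1 - q) = X * (1 - q powi n) + U * (q - 1) * (1 - q)"
        using eq unfolding e3 e4 e1 e2 by (simp add: BSG_mult)
      obtain Q where Q: "Q \<in> Zk k" "q powi n - 1 = of_int n * (q - 1) + (q - 1)^2 * Q"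
        using GC[of "int l" n] unfolding q_def by blast
      have "(q - 1) * (D - (q - 1) * (X * Q + U)) = 0"
        using E Q(2) unfolding D_def by algebra
      moreover have "q \<noteq> 1"
      proof -
        have "q = (of_int k)^l" unfolding q_def by simp
        moreover have "(of_int k :: rat)^l > 1" using k l1 by (intro one_less_power) auto
        ultimately show ?thesis by simp
      qed
      ultimately have "D = ((of_int k)^l - 1) * (X * Q + U)" unfolding q_def by simp
      moreover have "X * Q + U \<in> Zk k" using Zk_add[OF k Zk_mult[OF k X Q(1)] U] .
      ultimately show "\<exists>U \<in> Zk k. D = ((of_int k)^l - 1) * U" by blast
    qed
    then have nX: "of_int n * X = (of_int k) powi j" unfolding D_def by simp
    have "X * (of_int n * (of_int k) powi (- j)) = 1"
    proof -
      have "X * (of_int n * (of_int k) powi (- j)) = (of_int n * X) * (of_int k) powi (- j)" by simp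
      also have "\<dots> = 1" unfolding nX using kn by (simp add: power_int_minus)
      finally show ?thesis .
    qed
    moreover have "of_int n * (of_int k) powi (- j) \<in> Zk k" using Zk_mult[OF k Zk_int Zk_powi] .
    ultimately show "x \<in> A1 k" unfolding A1_def aelt_def xe using X by blast
  next
    fix x assume "x \<in> A1 k"
    then obtain X Z where xe: "x = (X, 0)" and X: "X \<in> Zk k" and Z: "Z \<in> Zk k" and XZ: "X * Z = 1"
      unfolding A1_def aelt_def by blast
    have xc: "x \<in> carrier (BSG k)" using X xe by (simp add: BSG_carrier)
    have "f_pi (BSG k) k \<gamma> x" unfolding f_pi_def
    proof (intro ballI impI)
      fix c v assume cc: "c \<in> carrier (BSG k)" and vc: "v \<in> carrier (BSG k)"
        and ab: "f_alpha (BSG k) c \<and> f_beta (BSG k) k v"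
      define C where "C = fst c"
      have ce: "c = (C, 0)" unfolding C_def using alpha_iff[OF k cc] ab by (metis prod.collapse)
      have C: "C \<in> Zk k" using cc unfolding C_def by (simp add: BSG_carrier)
      have sv: "snd v = 1" using beta_iff[OF k vc] ab by simp
      have vAb: "v \<in> Ab k" using beta_Ab[OF k vc sv] .
      obtain N i where CZ: "C * Z = of_int N * (of_int k) powi i"
        using Zk_mult[OF k C Z] unfolding Zk_def by blast
      have Ce: "C = of_int N * (of_int k) powi i * X"
      proof -
        have "C = (C * Z) * X" using XZ by (simp add: algebra_simps)
        then show ?thesis unfolding CZ .
      qed
      define w where "w = v [^]\<^bsub>BSG k\<^esub> (- i)"
      define h where "h = v [^]\<^bsub>BSG k\<^esub> N"
      have wc: "w \<in> carrier (BSG k)" and hc: "h \<in> carrier (BSG k)"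
        unfolding w_def h_def using vc by simp_all
      have sw: "snd w = - i" unfolding w_def using snd_pow[OF k vc] sv by simp
      have NX: "of_int N * X \<in> Zk k" using Zk_mult[OF k Zk_int X] .
      have ye: "inv\<^bsub>BSG k\<^esub> w \<otimes>\<^bsub>BSG k\<^esub> c \<otimes>\<^bsub>BSG k\<^esub> w = (of_int N * X, 0)"
      proof -
        have "(of_int k :: rat) powi i * (of_int k) powi (- i) = 1" using kn by (simp add: power_int_minus)
        then have "C * (of_int k) powi (- i) = of_int N * X" unfolding Ce
          by (metis (no_types, lifting) mult.commute mult.left_commute mult_1_right)
        then show ?thesis unfolding ce conj_A[OF k wc C] sw by simp
      qed
      have yc: "(of_int N * X, 0) \<in> carrier (BSG k)" using NX by (simp add: BSG_carrier)
      have "f_tau (BSG k) k \<gamma> x (of_int N * X, 0) h v"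
        unfolding f_tau_def
      proof (intro conjI ballI impI)
        show "f_alpha (BSG k) x" using alpha_iff[OF k xc] xe by simp
        show "f_alpha (BSG k) (of_int N * X, 0)" using alpha_iff[OF k yc] by simp
        show "gcomm (BSG k) h v = \<one>\<^bsub>BSG k\<^esub>" unfolding h_def using pow_cent[OF k vc] .
        show "f_beta (BSG k) k v" using ab by simp
        fix v' w' assume v'c: "v' \<in> carrier (BSG k)" and w'c: "w' \<in> carrier (BSG k)"
          and hyp: "gcomm (BSG k) v' v = \<one>\<^bsub>BSG k\<^esub> \<and> gcomm (BSG k) w' v = \<one>\<^bsub>BSG k\<^esub> \<and> \<gamma> h v' w' v"
        define l where "l = snd v'"
        define m where "m = snd w'"
        have v'e: "v' = v [^]\<^bsub>BSG k\<^esub> l" unfolding l_def using cent[OF k vc sv v'c] hyp by blast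
        have w'e: "w' = v [^]\<^bsub>BSG k\<^esub> m" unfolding m_def using cent[OF k vc sv w'c] hyp by blast
        have "N * l = m" using hyp gam[OF vAb, of N l m] unfolding h_def
          by (metis v'e w'e)
        define q where "q = (of_int k :: rat) powi l"
        obtain Q where Q: "Q \<in> Zk k" "q powi N - 1 = of_int N * (q - 1) + (q - 1)^2 * Q"
          using GC[of l N] unfolding q_def by blast
        define U where "U = - (X * Q)"
        have U: "U \<in> Zk k" unfolding U_def using Zk_uminus[OF k Zk_mult[OF k X Q(1)]] .
        have uc: "(U, 0) \<in> carrier (BSG k)" using U by (simp add: BSG_carrier)
        have e3: "gcomm (BSG k) (U, 0) v' = (U * (q - 1), 0)"
          using gcomm_Ag[OF k v'c U] l_def q_def  by simp
        have UZ: "U * (q - 1) \<in> Zk k"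
          unfolding q_def using Zk_mult[OF k U Zk_diff[OF k Zk_powi Zk_1]] .
        have e4: "gcomm (BSG k) v' (U * (q - 1), 0) = (U * (q - 1) * (1 - q), 0)"
          using gcomm_gA[OF k v'c UZ] l_def q_def  by simp
        have e1: "gcomm (BSG k) v' (of_int N * X, 0) = (of_int N * X * (1 - q), 0)"
          using gcomm_gA[OF k v'c NX] l_def q_def  by simp
        have e2: "gcomm (BSG k) w' x = (X * (1 - q powi N), 0)"
        proof -
          have pm: "(of_int k :: rat) powi m = q powi N"
            unfolding q_def \<open>N * l = m\<close>[symmetric] using power_int_mult[of "of_int k :: rat" l N]
            by (simp add: mult.commute)
          show ?thesis unfolding xe using gcomm_gA[OF k w'c X] m_def pm by simp
        qed
        have "of_int N * X * (1 - q) = X * (1 - q powi N) + U * (q - 1) * (1 - q)"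
          using Q(2) unfolding U_def by algebra
        then have "gcomm (BSG k) v' (of_int N * X, 0)
            = gcomm (BSG k) w' x \<otimes>\<^bsub>BSG k\<^esub> gcomm (BSG k) v' (gcomm (BSG k) (U, 0) v')"
          unfolding e3 e4 e1 e2 by (simp add: BSG_mult)
        moreover have "f_alpha (BSG k) (U, 0)" using alpha_iff[OF k uc] by simp
        ultimately show "\<exists>u \<in> carrier (BSG k). f_alpha (BSG k) u \<and>
            gcomm (BSG k) v' (of_int N * X, 0) = gcomm (BSG k) w' x \<otimes>\<^bsub>BSG k\<^esub> gcomm (BSG k) v' (gcomm (BSG k) u v')"
          using uc by blast
      qed
      moreover have "gcomm (BSG k) w v = \<one>\<^bsub>BSG k\<^esub>" unfolding w_def using pow_cent[OF k vc] .
      ultimately show "\<exists>w \<in> carrier (BSG k). \<exists>h \<in> carrier (BSG k). gcomm (BSG k) w v = \<one>\<^bsub>BSG k\<^esub> \<and>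
           f_tau (BSG k) k \<gamma> x (inv\<^bsub>BSG k\<^esub> w \<otimes>\<^bsub>BSG k\<^esub> c \<otimes>\<^bsub>BSG k\<^esub> w) h v"
        using wc hc ye by metis
    qed
    then show "x \<in> {x \<in> carrier (BSG k). f_pi (BSG k) k \<gamma> x}" using xc by simp
  qed
qed

end
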